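(* Let $\mathcal T$ be a self-orthogonal subcategory of $\mathcal C$. Then ${}_{\mathcal T}\mathcal X$ is closed under extensions, under direct summands, and under cones of inflations; the last means: for every $\mathbb E$-triangle $A\to B\to C\dashrightarrow$ with $A,B\in{}_{\mathcal T}\mathcal X$ one has $C\in{}_{\mathcal T}\mathcal X$.
   Context: $(\mathcal C,\mathbb E,\mathfrak s)$ is an extriangulated category in the sense of Nakaoka–Palu, Krull–Schmidt, with enough projectives and enough injectives; subcategories are full, additive, closed under isomorphisms. Higher extensions: $\mathbb E^1=\mathbb E$, $\mathbb E^{i+1}(X,Y)=\mathbb E(\Omega^iX,Y)\cong\mathbb E(X,\Sigma^iY)$. $\mathcal T$ is self-orthogonal if $\mathbb E^i(T_1,T_2)=0$ for all $i\ge1$, $T_1,T_2\in\mathcal T$. $\mathcal T^{\perp}=\{Y:\mathbb E^i(T,Y)=0\ \forall i\ge1,\forall T\in\mathcal T\}$. ${}_{\mathcal T}\mathcal X$ is the subcategory of objects $A$ for which there exist $\mathbb E$-triangles $K_{i+1}\to T_i\to K_i\dashrightarrow$ for all $i\ge0$ with $K_0=A$, $T_i\in\mathcal T$ and $K_{i+1}\in\mathcal T^{\perp}$ for all $i$. Closed under extensions: for every $\mathbb E$-triangle $A\to B\to C\dashrightarrow$ with $A,C$ in the subcategory, $B$ is in it. *)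

theory Defs
  imports Main
begin

text \<open>
  An extriangulated category (Nakaoka--Palu) is encoded as a record of data
  together with a predicate collecting all axioms.  Objects are all elements
  of the type 'o.  Morphisms live in an abelian group type 'm; the hom-set
  from X to Y is the subgroup hom C X Y (hom-sets may share the zero element,
  which is harmless since every statement is relativised to hom-sets).
  Composition: cmp C g f is "g after f".  Extensions live in an abelian group
  type 'e; ext C Z A is the group E(Z,A).  push C a d is a_* d and pull C c d
  is c^* d.  conf C A B Z x y d means that the sequence A --x--> B --y--> Z
  lies in the realization class s(d), i.e. A --x--> B --y--> Z --d--> is an
  E-triangle.
\<close>

record ('o, 'm, 'e) extri_data =
  hom  :: "'o \<Rightarrow> 'o \<Rightarrow> 'm set"
  cmp  :: "'m \<Rightarrow> 'm \<Rightarrow> 'm"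
  idm  :: "'o \<Rightarrow> 'm"
  ext  :: "'o \<Rightarrow> 'o \<Rightarrow> 'e set"
  push :: "'m \<Rightarrow> 'e \<Rightarrow> 'e"
  pull :: "'m \<Rightarrow> 'e \<Rightarrow> 'e"
  conf :: "'o \<Rightarrow> 'o \<Rightarrow> 'o \<Rightarrow> 'm \<Rightarrow> 'm \<Rightarrow> 'e \<Rightarrow> bool"

type_synonym ('o, 'm, 'e) extri = "('o, 'm, 'e) extri_data"

definition is_iso :: "('o, 'm::ab_group_add, 'e) extri \<Rightarrow> 'o \<Rightarrow> 'o \<Rightarrow> 'm \<Rightarrow> bool" where
  "is_iso C X Y f \<longleftrightarrow> f \<in> hom C X Y \<and>
     (\<exists>g \<in> hom C Y X. cmp C g f = idm C X \<and> cmp C f g = idm C Y)"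

definition isomorphic :: "('o, 'm::ab_group_add, 'e) extri \<Rightarrow> 'o \<Rightarrow> 'o \<Rightarrow> bool" where
  "isomorphic C X Y \<longleftrightarrow> (\<exists>f. is_iso C X Y f)"

definition is_zero_obj :: "('o, 'm::ab_group_add, 'e) extri \<Rightarrow> 'o \<Rightarrow> bool" where
  "is_zero_obj C Z \<longleftrightarrow> (\<forall>X. hom C Z X = {0} \<and> hom C X Z = {0})"

definition biproduct :: "('o, 'm::ab_group_add, 'e) extri \<Rightarrow> 'o \<Rightarrow> 'o \<Rightarrow> 'o \<Rightarrow>
    'm \<Rightarrow> 'm \<Rightarrow> 'm \<Rightarrow> 'm \<Rightarrow> bool" where
  "biproduct C X Y S i1 i2 p1 p2 \<longleftrightarrow>
     i1 \<in> hom C X S \<and> i2 \<in> hom C Y S \<and> p1 \<in> hom C S X \<and> p2 \<in> hom C S Y \<and>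
     cmp C p1 i1 = idm C X \<and> cmp C p2 i2 = idm C Y \<and>
     cmp C p1 i2 = 0 \<and> cmp C p2 i1 = 0 \<and>
     cmp C i1 p1 + cmp C i2 p2 = idm C S"

definition additive_cat :: "('o, 'm::ab_group_add, 'e) extri \<Rightarrow> bool" where
  "additive_cat C \<longleftrightarrow>
     (\<forall>X Y Z f g. f \<in> hom C X Y \<longrightarrow> g \<in> hom C Y Z \<longrightarrow> cmp C g f \<in> hom C X Z) \<and>
     (\<forall>X. idm C X \<in> hom C X X) \<and>
     (\<forall>W X Y Z f g h. f \<in> hom C W X \<longrightarrow> g \<in> hom C X Y \<longrightarrow> h \<in> hom C Y Z \<longrightarrow>
         cmp C h (cmp C g f) = cmp C (cmp C h g) f) \<and>
     (\<forall>X Y f. f \<in> hom C X Y \<longrightarrow> cmp C f (idm C X) = f \<and> cmp C (idm C Y) f = f) \<and>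
     (\<forall>X Y. 0 \<in> hom C X Y \<and> (\<forall>f \<in> hom C X Y. \<forall>g \<in> hom C X Y. f + g \<in> hom C X Y) \<and>
         (\<forall>f \<in> hom C X Y. - f \<in> hom C X Y)) \<and>
     (\<forall>X Y Z f f' g. f \<in> hom C X Y \<longrightarrow> f' \<in> hom C X Y \<longrightarrow> g \<in> hom C Y Z \<longrightarrow>
         cmp C g (f + f') = cmp C g f + cmp C g f') \<and>
     (\<forall>X Y Z f g g'. f \<in> hom C X Y \<longrightarrow> g \<in> hom C Y Z \<longrightarrow> g' \<in> hom C Y Z \<longrightarrow>
         cmp C (g + g') f = cmp C g f + cmp C g' f) \<and>
     (\<exists>Z. is_zero_obj C Z) \<and>
     (\<forall>X Y. \<exists>S i1 i2 p1 p2. biproduct C X Y S i1 i2 p1 p2)"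

definition local_obj :: "('o, 'm::ab_group_add, 'e) extri \<Rightarrow> 'o \<Rightarrow> bool" where
  "local_obj C X \<longleftrightarrow> idm C X \<noteq> 0 \<and>
     (\<forall>f \<in> hom C X X. is_iso C X X f \<or> is_iso C X X (idm C X - f))"

definition krull_schmidt :: "('o, 'm::ab_group_add, 'e) extri \<Rightarrow> bool" where
  "krull_schmidt C \<longleftrightarrow>
     (\<forall>X. \<exists>(n::nat) Xs inj prj.
        (\<forall>i<n. local_obj C (Xs i) \<and> inj i \<in> hom C (Xs i) X \<and> prj i \<in> hom C X (Xs i)) \<and>
        (\<forall>i<n. \<forall>j<n. cmp C (prj i) (inj j) = (if i = j then idm C (Xs i) else 0)) \<and>
        (\<Sum>i<n. cmp C (inj i) (prj i)) = idm C X)"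

definition ET1 :: "('o, 'm::ab_group_add, 'e::ab_group_add) extri \<Rightarrow> bool" where
  "ET1 C \<longleftrightarrow>
     (\<forall>Z A. 0 \<in> ext C Z A \<and> (\<forall>d \<in> ext C Z A. \<forall>d' \<in> ext C Z A. d + d' \<in> ext C Z A) \<and>
        (\<forall>d \<in> ext C Z A. - d \<in> ext C Z A)) \<and>
     (\<forall>Z A A' a d. a \<in> hom C A A' \<longrightarrow> d \<in> ext C Z A \<longrightarrow> push C a d \<in> ext C Z A') \<and>
     (\<forall>Z Z' A c d. c \<in> hom C Z' Z \<longrightarrow> d \<in> ext C Z A \<longrightarrow> pull C c d \<in> ext C Z' A) \<and>
     (\<forall>Z A d. d \<in> ext C Z A \<longrightarrow> push C (idm C A) d = d \<and> pull C (idm C Z) d = d) \<and>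
     (\<forall>Z A A' A'' a a' d. a \<in> hom C A A' \<longrightarrow> a' \<in> hom C A' A'' \<longrightarrow> d \<in> ext C Z A \<longrightarrow>
        push C (cmp C a' a) d = push C a' (push C a d)) \<and>
     (\<forall>Z Z' Z'' A c c' d. c \<in> hom C Z' Z \<longrightarrow> c' \<in> hom C Z'' Z' \<longrightarrow> d \<in> ext C Z A \<longrightarrow>
        pull C (cmp C c c') d = pull C c' (pull C c d)) \<and>
     (\<forall>Z Z' A A' a c d. a \<in> hom C A A' \<longrightarrow> c \<in> hom C Z' Z \<longrightarrow> d \<in> ext C Z A \<longrightarrow>
        push C a (pull C c d) = pull C c (push C a d)) \<and>
     (\<forall>Z A A' a a' d d'. a \<in> hom C A A' \<longrightarrow> a' \<in> hom C A A' \<longrightarrow>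
        d \<in> ext C Z A \<longrightarrow> d' \<in> ext C Z A \<longrightarrow>
        push C a (d + d') = push C a d + push C a d' \<and>
        push C (a + a') d = push C a d + push C a' d) \<and>
     (\<forall>Z Z' A c c' d d'. c \<in> hom C Z' Z \<longrightarrow> c' \<in> hom C Z' Z \<longrightarrow>
        d \<in> ext C Z A \<longrightarrow> d' \<in> ext C Z A \<longrightarrow>
        pull C c (d + d') = pull C c d + pull C c d' \<and>
        pull C (c + c') d = pull C c d + pull C c' d)"

definition ET2 :: "('o, 'm::ab_group_add, 'e::ab_group_add) extri \<Rightarrow> bool" where
  "ET2 C \<longleftrightarrow>
     (\<forall>A B Z x y d. conf C A B Z x y d \<longrightarrow>
        x \<in> hom C A B \<and> y \<in> hom C B Z \<and> d \<in> ext C Z A) \<and>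
     (\<forall>A Z d. d \<in> ext C Z A \<longrightarrow> (\<exists>B x y. conf C A B Z x y d)) \<and>
     (\<forall>A B B' Z x y x' y' d. conf C A B Z x y d \<longrightarrow>
        (conf C A B' Z x' y' d \<longleftrightarrow>
          x' \<in> hom C A B' \<and> y' \<in> hom C B' Z \<and>
          (\<exists>b. is_iso C B B' b \<and> cmp C b x = x' \<and> cmp C y' b = y))) \<and>
     (\<forall>A B Z x y d A' B' Z' x' y' d' a c.
        conf C A B Z x y d \<longrightarrow> conf C A' B' Z' x' y' d' \<longrightarrow>
        a \<in> hom C A A' \<longrightarrow> c \<in> hom C Z Z' \<longrightarrow> push C a d = pull C c d' \<longrightarrow>
        (\<exists>b \<in> hom C B B'. cmp C b x = cmp C x' a \<and> cmp C y' b = cmp C c y)) \<and>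
     (\<forall>A Z S i1 i2 p1 p2. biproduct C A Z S i1 i2 p1 p2 \<longrightarrow> conf C A S Z i1 p2 0) \<and>
     (\<forall>A B Z x y d A' B' Z' x' y' d'
        SA iA1 iA2 pA1 pA2 SB iB1 iB2 pB1 pB2 SZ iZ1 iZ2 pZ1 pZ2.
        conf C A B Z x y d \<longrightarrow> conf C A' B' Z' x' y' d' \<longrightarrow>
        biproduct C A A' SA iA1 iA2 pA1 pA2 \<longrightarrow>
        biproduct C B B' SB iB1 iB2 pB1 pB2 \<longrightarrow>
        biproduct C Z Z' SZ iZ1 iZ2 pZ1 pZ2 \<longrightarrow>
        conf C SA SB SZ
          (cmp C iB1 (cmp C x pA1) + cmp C iB2 (cmp C x' pA2))
          (cmp C iZ1 (cmp C y pB1) + cmp C iZ2 (cmp C y' pB2))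
          (push C iA1 (pull C pZ1 d) + push C iA2 (pull C pZ2 d')))"

definition ET3 :: "('o, 'm::ab_group_add, 'e::ab_group_add) extri \<Rightarrow> bool" where
  "ET3 C \<longleftrightarrow>
     (\<forall>A B Z x y d A' B' Z' x' y' d' a b.
        conf C A B Z x y d \<longrightarrow> conf C A' B' Z' x' y' d' \<longrightarrow>
        a \<in> hom C A A' \<longrightarrow> b \<in> hom C B B' \<longrightarrow> cmp C b x = cmp C x' a \<longrightarrow>
        (\<exists>c \<in> hom C Z Z'. cmp C c y = cmp C y' b \<and> push C a d = pull C c d'))"

definition ET3op :: "('o, 'm::ab_group_add, 'e::ab_group_add) extri \<Rightarrow> bool" where
  "ET3op C \<longleftrightarrow>
     (\<forall>A B Z x y d A' B' Z' x' y' d' b c.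
        conf C A B Z x y d \<longrightarrow> conf C A' B' Z' x' y' d' \<longrightarrow>
        b \<in> hom C B B' \<longrightarrow> c \<in> hom C Z Z' \<longrightarrow> cmp C c y = cmp C y' b \<longrightarrow>
        (\<exists>a \<in> hom C A A'. cmp C b x = cmp C x' a \<and> push C a d = pull C c d'))"

definition ET4 :: "('o, 'm::ab_group_add, 'e::ab_group_add) extri \<Rightarrow> bool" where
  "ET4 C \<longleftrightarrow>
     (\<forall>A B D f f' d C' F g g' d'.
        conf C A B D f f' d \<longrightarrow> conf C B C' F g g' d' \<longrightarrow>
        (\<exists>E h h' dm e d''.
           conf C A C' E h h' d'' \<and>
           conf C D E F dm e (push C f' d') \<and>
           h = cmp C g f \<and> cmp C dm f' = cmp C h' g \<and> cmp C e h' = g' \<and>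
           pull C dm d'' = d \<and> push C f d'' = pull C e d'))"

definition ET4op :: "('o, 'm::ab_group_add, 'e::ab_group_add) extri \<Rightarrow> bool" where
  "ET4op C \<longleftrightarrow>
     (\<forall>D A B f' f d F C' g' g d'.
        conf C D A B f' f d \<longrightarrow> conf C F B C' g' g d' \<longrightarrow>
        (\<exists>E h h' dm e d''.
           conf C E A C' h' h d'' \<and>
           conf C D E F dm e (pull C g' d) \<and>
           cmp C h' dm = f' \<and> cmp C g' e = cmp C f h' \<and> cmp C g f = h \<and>
           d' = push C e d'' \<and> push C dm d = pull C g d''))"

definition extriangulated :: "('o, 'm::ab_group_add, 'e::ab_group_add) extri \<Rightarrow> bool" where
  "extriangulated C \<longleftrightarrow> additive_cat C \<and> ET1 C \<and> ET2 C \<and> ET3 C \<and> ET3op C \<and> ET4 C \<and> ET4op C"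

definition projective :: "('o, 'm::ab_group_add, 'e::ab_group_add) extri \<Rightarrow> 'o \<Rightarrow> bool" where
  "projective C P \<longleftrightarrow>
     (\<forall>A B Z x y d c. conf C A B Z x y d \<longrightarrow> c \<in> hom C P Z \<longrightarrow>
        (\<exists>b \<in> hom C P B. cmp C y b = c))"

definition injective :: "('o, 'm::ab_group_add, 'e::ab_group_add) extri \<Rightarrow> 'o \<Rightarrow> bool" where
  "injective C I \<longleftrightarrow>
     (\<forall>A B Z x y d a. conf C A B Z x y d \<longrightarrow> a \<in> hom C A I \<longrightarrow>
        (\<exists>b \<in> hom C B I. cmp C b x = a))"

definition enough_projectives :: "('o, 'm::ab_group_add, 'e::ab_group_add) extri \<Rightarrow> bool" where
  "enough_projectives C \<longleftrightarrow>
     (\<forall>X. \<exists>K P x y d. projective C P \<and> conf C K P X x y d)"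

definition enough_injectives :: "('o, 'm::ab_group_add, 'e::ab_group_add) extri \<Rightarrow> bool" where
  "enough_injectives C \<longleftrightarrow>
     (\<forall>X. \<exists>I Z x y d. injective C I \<and> conf C X I Z x y d)"

definition syzygy :: "('o, 'm::ab_group_add, 'e::ab_group_add) extri \<Rightarrow> ('o \<Rightarrow> 'o) \<Rightarrow> bool" where
  "syzygy C \<Omega> \<longleftrightarrow> (\<forall>X. \<exists>P x y d. projective C P \<and> conf C (\<Omega> X) P X x y d)"

text \<open>Higher extension groups: E^1 = E and E^(i+1)(X,Y) = E(Omega^i X, Y).
  Only meaningful for i \<ge> 1.\<close>
definition hext :: "('o, 'm::ab_group_add, 'e::ab_group_add) extri \<Rightarrow> ('o \<Rightarrow> 'o) \<Rightarrow>
    nat \<Rightarrow> 'o \<Rightarrow> 'o \<Rightarrow> 'e set" where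
  "hext C \<Omega> i X Y = ext C ((\<Omega> ^^ (i - 1)) X) Y"

text \<open>Full additive subcategory closed under isomorphisms, given by its
  class of objects.\<close>
definition subcat :: "('o, 'm::ab_group_add, 'e::ab_group_add) extri \<Rightarrow> 'o set \<Rightarrow> bool" where
  "subcat C T \<longleftrightarrow>
     (\<forall>X Y. X \<in> T \<longrightarrow> isomorphic C X Y \<longrightarrow> Y \<in> T) \<and>
     (\<forall>Z. is_zero_obj C Z \<longrightarrow> Z \<in> T) \<and>
     (\<forall>X Y S i1 i2 p1 p2. biproduct C X Y S i1 i2 p1 p2 \<longrightarrow> X \<in> T \<longrightarrow> Y \<in> T \<longrightarrow> S \<in> T)"

definition self_orthogonal :: "('o, 'm::ab_group_add, 'e::ab_group_add) extri \<Rightarrow> ('o \<Rightarrow> 'o) \<Rightarrow>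
    'o set \<Rightarrow> bool" where
  "self_orthogonal C \<Omega> T \<longleftrightarrow>
     (\<forall>i\<ge>1. \<forall>T1 \<in> T. \<forall>T2 \<in> T. hext C \<Omega> i T1 T2 = {0})"

definition right_perp :: "('o, 'm::ab_group_add, 'e::ab_group_add) extri \<Rightarrow> ('o \<Rightarrow> 'o) \<Rightarrow>
    'o set \<Rightarrow> 'o set" where
  "right_perp C \<Omega> T = {Y. \<forall>i\<ge>1. \<forall>T0 \<in> T. hext C \<Omega> i T0 Y = {0}}"

definition TX :: "('o, 'm::ab_group_add, 'e::ab_group_add) extri \<Rightarrow> ('o \<Rightarrow> 'o) \<Rightarrow>
    'o set \<Rightarrow> 'o set" where
  "TX C \<Omega> T = {A. \<exists>(K :: nat \<Rightarrow> 'o) Tm x y d. K 0 = A \<and>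
      (\<forall>i. Tm i \<in> T \<and> K (Suc i) \<in> right_perp C \<Omega> T \<and>
           conf C (K (Suc i)) (Tm i) (K i) (x i) (y i) (d i))}"

definition ext_closed :: "('o, 'm::ab_group_add, 'e::ab_group_add) extri \<Rightarrow> 'o set \<Rightarrow> bool" where
  "ext_closed C S \<longleftrightarrow>
     (\<forall>A B Z x y d. conf C A B Z x y d \<longrightarrow> A \<in> S \<longrightarrow> Z \<in> S \<longrightarrow> B \<in> S)"

definition summand_closed :: "('o, 'm::ab_group_add, 'e::ab_group_add) extri \<Rightarrow> 'o set \<Rightarrow> bool" where
  "summand_closed C S \<longleftrightarrow>
     (\<forall>X Y W i1 i2 p1 p2. biproduct C X Y W i1 i2 p1 p2 \<longrightarrow> W \<in> S \<longrightarrow> X \<in> S)"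

definition cone_closed :: "('o, 'm::ab_group_add, 'e::ab_group_add) extri \<Rightarrow> 'o set \<Rightarrow> bool" where
  "cone_closed C S \<longleftrightarrow>
     (\<forall>A B Z x y d. conf C A B Z x y d \<longrightarrow> A \<in> S \<longrightarrow> B \<in> S \<longrightarrow> Z \<in> S)"

end

theory Submission imports Defs begin

locale ex =
  fixes C :: "('o, 'm::ab_group_add, 'e::ab_group_add) extri"
  assumes ax: "extriangulated C"
begin

lemma add_cat: "additive_cat C" using ax by (simp add: extriangulated_def)

lemma comp_hom[intro]: "f \<in> hom C X Y \<Longrightarrow> g \<in> hom C Y Z \<Longrightarrow> cmp C g f \<in> hom C X Z"
  using add_cat[unfolded additive_cat_def, THEN conjunct1] by blast
lemma id_hom[simp, intro]: "idm C X \<in> hom C X X"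
  using add_cat[unfolded additive_cat_def, THEN conjunct2, THEN conjunct1] by blast
lemma assoc: "f \<in> hom C W X \<Longrightarrow> g \<in> hom C X Y \<Longrightarrow> h \<in> hom C Y Z \<Longrightarrow>
         cmp C h (cmp C g f) = cmp C (cmp C h g) f"
  using add_cat[unfolded additive_cat_def, THEN conjunct2, THEN conjunct2, THEN conjunct1] by blast
lemma id_r[simp]: "f \<in> hom C X Y \<Longrightarrow> cmp C f (idm C X) = f"
  using add_cat[unfolded additive_cat_def, THEN conjunct2, THEN conjunct2, THEN conjunct2, THEN conjunct1] by blast
lemma id_l[simp]: "f \<in> hom C X Y \<Longrightarrow> cmp C (idm C Y) f = f"
  using add_cat[unfolded additive_cat_def, THEN conjunct2, THEN conjunct2, THEN conjunct2, THEN conjunct1] by blast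
lemma zero_hom[simp, intro]: "0 \<in> hom C X Y"
  using add_cat[unfolded additive_cat_def, THEN conjunct2, THEN conjunct2, THEN conjunct2, THEN conjunct2, THEN conjunct1] by blast
lemma add_hom[intro]: "f \<in> hom C X Y \<Longrightarrow> g \<in> hom C X Y \<Longrightarrow> f + g \<in> hom C X Y"
  using add_cat[unfolded additive_cat_def, THEN conjunct2, THEN conjunct2, THEN conjunct2, THEN conjunct2, THEN conjunct1] by blast
lemma neg_hom[intro]: "f \<in> hom C X Y \<Longrightarrow> - f \<in> hom C X Y"
  using add_cat[unfolded additive_cat_def, THEN conjunct2, THEN conjunct2, THEN conjunct2, THEN conjunct2, THEN conjunct1] by blast
lemma diff_hom[intro]: "f \<in> hom C X Y \<Longrightarrow> g \<in> hom C X Y \<Longrightarrow> f - g \<in> hom C X Y"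
  by (metis add_hom neg_hom diff_conv_add_uminus)
lemma distl: "f \<in> hom C X Y \<Longrightarrow> f' \<in> hom C X Y \<Longrightarrow> g \<in> hom C Y Z \<Longrightarrow>
         cmp C g (f + f') = cmp C g f + cmp C g f'"
  using add_cat[unfolded additive_cat_def, THEN conjunct2, THEN conjunct2, THEN conjunct2, THEN conjunct2, THEN conjunct2, THEN conjunct1] by blast
lemma distr: "f \<in> hom C X Y \<Longrightarrow> g \<in> hom C Y Z \<Longrightarrow> g' \<in> hom C Y Z \<Longrightarrow>
         cmp C (g + g') f = cmp C g f + cmp C g' f"
  using add_cat[unfolded additive_cat_def, THEN conjunct2, THEN conjunct2, THEN conjunct2, THEN conjunct2, THEN conjunct2, THEN conjunct2, THEN conjunct1] by blast


lemma cmp_0r[simp]: "g \<in> hom C Y Z \<Longrightarrow> cmp C g (0::'m) = 0"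
proof -
  assume g: "g \<in> hom C Y Z"
  have "cmp C g (0 + 0) = cmp C g 0 + cmp C g 0" using distl[OF zero_hom zero_hom g] by simp
  thus ?thesis by simp
qed
lemma cmp_0l[simp]: "f \<in> hom C X Y \<Longrightarrow> cmp C (0::'m) f = 0"
proof -
  assume f: "f \<in> hom C X Y"
  have "cmp C (0 + 0) f = cmp C 0 f + cmp C 0 f" using distr[OF f zero_hom zero_hom] by simp
  thus ?thesis by simp
qed
lemma cmp_negr: "f \<in> hom C X Y \<Longrightarrow> g \<in> hom C Y Z \<Longrightarrow> cmp C g (- f) = - cmp C g f"
proof -
  assume a: "f \<in> hom C X Y" "g \<in> hom C Y Z"
  have "cmp C g (f + - f) = cmp C g f + cmp C g (- f)" using distl[OF a(1) neg_hom[OF a(1)] a(2)] .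
  hence "0 = cmp C g f + cmp C g (- f)" using a by simp
  thus ?thesis by (metis add.commute add_eq_0_iff)
qed
lemma cmp_negl: "f \<in> hom C X Y \<Longrightarrow> g \<in> hom C Y Z \<Longrightarrow> cmp C (- g) f = - cmp C g f"
proof -
  assume a: "f \<in> hom C X Y" "g \<in> hom C Y Z"
  have "cmp C (g + - g) f = cmp C g f + cmp C (- g) f" using distr[OF a(1) a(2) neg_hom[OF a(2)]] .
  hence "0 = cmp C g f + cmp C (- g) f" using a by simp
  thus ?thesis by (metis add.commute add_eq_0_iff)
qed
lemma cmp_diffr: "f \<in> hom C X Y \<Longrightarrow> f' \<in> hom C X Y \<Longrightarrow> g \<in> hom C Y Z \<Longrightarrow>
         cmp C g (f - f') = cmp C g f - cmp C g f'"
proof -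
  assume a: "f \<in> hom C X Y" "f' \<in> hom C X Y" "g \<in> hom C Y Z"
  have "cmp C g (f + - f') = cmp C g f + cmp C g (- f')" using distl[OF a(1) neg_hom[OF a(2)] a(3)] .
  also have "cmp C g (- f') = - cmp C g f'" using cmp_negr[OF a(2) a(3)] .
  finally show ?thesis by (simp only: diff_conv_add_uminus)
qed
lemma cmp_diffl: "f \<in> hom C X Y \<Longrightarrow> g \<in> hom C Y Z \<Longrightarrow> g' \<in> hom C Y Z \<Longrightarrow>
         cmp C (g - g') f = cmp C g f - cmp C g' f"
proof -
  assume a: "f \<in> hom C X Y" "g \<in> hom C Y Z" "g' \<in> hom C Y Z"
  have "cmp C (g + - g') f = cmp C g f + cmp C (- g') f" using distr[OF a(1) a(2) neg_hom[OF a(3)]] .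
  also have "cmp C (- g') f = - cmp C g' f" using cmp_negl[OF a(1) a(3)] .
  finally show ?thesis by (simp only: diff_conv_add_uminus)
qed

lemma zero_obj_ex: "\<exists>Z. is_zero_obj C Z"
  using add_cat[unfolded additive_cat_def, THEN conjunct2, THEN conjunct2, THEN conjunct2, THEN conjunct2, THEN conjunct2, THEN conjunct2, THEN conjunct2, THEN conjunct1] by blast
lemma biprod_ex: "\<exists>S i1 i2 p1 p2. biproduct C X Y S i1 i2 p1 p2"
  using add_cat[unfolded additive_cat_def, THEN conjunct2, THEN conjunct2, THEN conjunct2, THEN conjunct2, THEN conjunct2, THEN conjunct2, THEN conjunct2, THEN conjunct2] by blast
lemma zero_homs: "is_zero_obj C Z \<Longrightarrow> hom C Z X = {0} \<and> hom C X Z = {0}"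
  by (simp add: is_zero_obj_def)
lemma zero_id: "is_zero_obj C Z \<Longrightarrow> idm C Z = 0"
  using zero_homs id_hom by blast


lemma et1: "ET1 C" using ax by (simp add: extriangulated_def)
lemma ext_0[simp,intro]: "0 \<in> ext C Z A" using et1[unfolded ET1_def, THEN conjunct1] by blast
lemma ext_add[intro]: "d \<in> ext C Z A \<Longrightarrow> d' \<in> ext C Z A \<Longrightarrow> d + d' \<in> ext C Z A" using et1[unfolded ET1_def, THEN conjunct1] by blast
lemma ext_neg[intro]: "d \<in> ext C Z A \<Longrightarrow> - d \<in> ext C Z A" using et1[unfolded ET1_def, THEN conjunct1] by blast
lemma ext_diff[intro]: "d \<in> ext C Z A \<Longrightarrow> d' \<in> ext C Z A \<Longrightarrow> d - d' \<in> ext C Z A"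
  unfolding diff_conv_add_uminus by (intro ext_add ext_neg)
lemma push_ext[intro]: "a \<in> hom C A A' \<Longrightarrow> d \<in> ext C Z A \<Longrightarrow> push C a d \<in> ext C Z A'" using et1[unfolded ET1_def, THEN conjunct2, THEN conjunct1] by blast
lemma pull_ext[intro]: "c \<in> hom C Z' Z \<Longrightarrow> d \<in> ext C Z A \<Longrightarrow> pull C c d \<in> ext C Z' A" using et1[unfolded ET1_def, THEN conjunct2, THEN conjunct2, THEN conjunct1] by blast
lemma push_id[simp]: "d \<in> ext C Z A \<Longrightarrow> push C (idm C A) d = d" using et1[unfolded ET1_def, THEN conjunct2, THEN conjunct2, THEN conjunct2, THEN conjunct1] by blast
lemma pull_id[simp]: "d \<in> ext C Z A \<Longrightarrow> pull C (idm C Z) d = d" using et1[unfolded ET1_def, THEN conjunct2, THEN conjunct2, THEN conjunct2, THEN conjunct1] by blast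
lemma push_comp: "a \<in> hom C A A' \<Longrightarrow> a' \<in> hom C A' A'' \<Longrightarrow> d \<in> ext C Z A \<Longrightarrow>
        push C (cmp C a' a) d = push C a' (push C a d)" using et1[unfolded ET1_def, THEN conjunct2, THEN conjunct2, THEN conjunct2, THEN conjunct2, THEN conjunct1] by blast
lemma pull_comp: "c \<in> hom C Z' Z \<Longrightarrow> c' \<in> hom C Z'' Z' \<Longrightarrow> d \<in> ext C Z A \<Longrightarrow>
        pull C (cmp C c c') d = pull C c' (pull C c d)" using et1[unfolded ET1_def, THEN conjunct2, THEN conjunct2, THEN conjunct2, THEN conjunct2, THEN conjunct2, THEN conjunct1] by blast
lemma push_pull: "a \<in> hom C A A' \<Longrightarrow> c \<in> hom C Z' Z \<Longrightarrow> d \<in> ext C Z A \<Longrightarrow>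
        push C a (pull C c d) = pull C c (push C a d)" using et1[unfolded ET1_def, THEN conjunct2, THEN conjunct2, THEN conjunct2, THEN conjunct2, THEN conjunct2, THEN conjunct2, THEN conjunct1] by blast
lemma push_addd: "a \<in> hom C A A' \<Longrightarrow> d \<in> ext C Z A \<Longrightarrow> d' \<in> ext C Z A \<Longrightarrow>
        push C a (d + d') = push C a d + push C a d'" using et1[unfolded ET1_def, THEN conjunct2, THEN conjunct2, THEN conjunct2, THEN conjunct2, THEN conjunct2, THEN conjunct2, THEN conjunct2, THEN conjunct1] by blast
lemma push_adda: "a \<in> hom C A A' \<Longrightarrow> a' \<in> hom C A A' \<Longrightarrow> d \<in> ext C Z A \<Longrightarrow>
        push C (a + a') d = push C a d + push C a' d" using et1[unfolded ET1_def, THEN conjunct2, THEN conjunct2, THEN conjunct2, THEN conjunct2, THEN conjunct2, THEN conjunct2, THEN conjunct2, THEN conjunct1] by blast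
lemma pull_addd: "c \<in> hom C Z' Z \<Longrightarrow> d \<in> ext C Z A \<Longrightarrow> d' \<in> ext C Z A \<Longrightarrow>
        pull C c (d + d') = pull C c d + pull C c d'" using et1[unfolded ET1_def, THEN conjunct2, THEN conjunct2, THEN conjunct2, THEN conjunct2, THEN conjunct2, THEN conjunct2, THEN conjunct2, THEN conjunct2] by blast
lemma pull_adda: "c \<in> hom C Z' Z \<Longrightarrow> c' \<in> hom C Z' Z \<Longrightarrow> d \<in> ext C Z A \<Longrightarrow>
        pull C (c + c') d = pull C c d + pull C c' d" using et1[unfolded ET1_def, THEN conjunct2, THEN conjunct2, THEN conjunct2, THEN conjunct2, THEN conjunct2, THEN conjunct2, THEN conjunct2, THEN conjunct2] by blast

lemma push_0d[simp]: "a \<in> hom C A A' \<Longrightarrow> push C a (0::'e) = 0"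
proof -
  assume a: "a \<in> hom C A A'"
  have "push C a (0 + 0) = push C a 0 + push C a 0" using push_addd[OF a ext_0 ext_0] .
  thus ?thesis by simp
qed
lemma pull_0d[simp]: "c \<in> hom C Z' Z \<Longrightarrow> pull C c (0::'e) = 0"
proof -
  assume a: "c \<in> hom C Z' Z"
  have "pull C c (0 + 0) = pull C c 0 + pull C c 0" using pull_addd[OF a ext_0 ext_0] .
  thus ?thesis by simp
qed
lemma push_0a[simp]: "d \<in> ext C Z A \<Longrightarrow> push C (0::'m) d = 0"
proof -
  assume a: "d \<in> ext C Z A"
  have "push C (0 + 0) d = push C 0 d + push C 0 d" using push_adda[OF zero_hom zero_hom a] .
  thus ?thesis by simp
qed
lemma pull_0a[simp]: "d \<in> ext C Z A \<Longrightarrow> pull C (0::'m) d = 0"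
proof -
  assume a: "d \<in> ext C Z A"
  have "pull C (0 + 0) d = pull C 0 d + pull C 0 d" using pull_adda[OF zero_hom zero_hom a] .
  thus ?thesis by simp
qed
lemma push_diffd: "a \<in> hom C A A' \<Longrightarrow> d \<in> ext C Z A \<Longrightarrow> d' \<in> ext C Z A \<Longrightarrow>
        push C a (d - d') = push C a d - push C a d'"
proof -
  assume a: "a \<in> hom C A A'" "d \<in> ext C Z A" "d' \<in> ext C Z A"
  have "push C a ((d - d') + d') = push C a (d - d') + push C a d'" using push_addd[OF a(1) ext_diff[OF a(2,3)] a(3)] .
  thus ?thesis by (simp add: eq_diff_eq)
qed
lemma pull_diffd: "c \<in> hom C Z' Z \<Longrightarrow> d \<in> ext C Z A \<Longrightarrow> d' \<in> ext C Z A \<Longrightarrow>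
        pull C c (d - d') = pull C c d - pull C c d'"
proof -
  assume a: "c \<in> hom C Z' Z" "d \<in> ext C Z A" "d' \<in> ext C Z A"
  have "pull C c ((d - d') + d') = pull C c (d - d') + pull C c d'" using pull_addd[OF a(1) ext_diff[OF a(2,3)] a(3)] .
  thus ?thesis by (simp add: eq_diff_eq)
qed
lemma push_diffa: "a \<in> hom C A A' \<Longrightarrow> a' \<in> hom C A A' \<Longrightarrow> d \<in> ext C Z A \<Longrightarrow>
        push C (a - a') d = push C a d - push C a' d"
proof -
  assume a: "a \<in> hom C A A'" "a' \<in> hom C A A'" "d \<in> ext C Z A"
  have "push C ((a - a') + a') d = push C (a - a') d + push C a' d" using push_adda[OF diff_hom[OF a(1,2)] a(2,3)] .
  thus ?thesis by (simp add: eq_diff_eq)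
qed


lemma et2: "ET2 C" using ax by (simp add: extriangulated_def)
lemma conf_x: "conf C A B Z x y d \<Longrightarrow> x \<in> hom C A B" using et2[unfolded ET2_def, THEN conjunct1] by blast
lemma conf_y: "conf C A B Z x y d \<Longrightarrow> y \<in> hom C B Z" using et2[unfolded ET2_def, THEN conjunct1] by blast
lemma conf_d: "conf C A B Z x y d \<Longrightarrow> d \<in> ext C Z A" using et2[unfolded ET2_def, THEN conjunct1] by blast
lemma realize: "d \<in> ext C Z A \<Longrightarrow> \<exists>B x y. conf C A B Z x y d" using et2[unfolded ET2_def, THEN conjunct2, THEN conjunct1] by blast
lemma iso_cl: "conf C A B Z x y d \<Longrightarrow>
        (conf C A B' Z x' y' d \<longleftrightarrow>
          x' \<in> hom C A B' \<and> y' \<in> hom C B' Z \<and>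
          (\<exists>b. is_iso C B B' b \<and> cmp C b x = x' \<and> cmp C y' b = y))" using et2[unfolded ET2_def, THEN conjunct2, THEN conjunct2, THEN conjunct1] by blast
lemma morph: "conf C A B Z x y d \<Longrightarrow> conf C A' B' Z' x' y' d' \<Longrightarrow>
        a \<in> hom C A A' \<Longrightarrow> c \<in> hom C Z Z' \<Longrightarrow> push C a d = pull C c d' \<Longrightarrow>
        (\<exists>b \<in> hom C B B'. cmp C b x = cmp C x' a \<and> cmp C y' b = cmp C c y)" using et2[unfolded ET2_def, THEN conjunct2, THEN conjunct2, THEN conjunct2, THEN conjunct1] by blast
lemma split_conf: "biproduct C A Z S i1 i2 p1 p2 \<Longrightarrow> conf C A S Z i1 p2 0" using et2[unfolded ET2_def, THEN conjunct2, THEN conjunct2, THEN conjunct2, THEN conjunct2, THEN conjunct1] by blast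
lemma dsum: "conf C A B Z x y d \<Longrightarrow> conf C A' B' Z' x' y' d' \<Longrightarrow>
        biproduct C A A' SA iA1 iA2 pA1 pA2 \<Longrightarrow>
        biproduct C B B' SB iB1 iB2 pB1 pB2 \<Longrightarrow>
        biproduct C Z Z' SZ iZ1 iZ2 pZ1 pZ2 \<Longrightarrow>
        conf C SA SB SZ
          (cmp C iB1 (cmp C x pA1) + cmp C iB2 (cmp C x' pA2))
          (cmp C iZ1 (cmp C y pB1) + cmp C iZ2 (cmp C y' pB2))
          (push C iA1 (pull C pZ1 d) + push C iA2 (pull C pZ2 d'))" by (rule et2[unfolded ET2_def, THEN conjunct2, THEN conjunct2, THEN conjunct2, THEN conjunct2, THEN conjunct2, rule_format])

lemma et3: "conf C A B Z x y d \<Longrightarrow> conf C A' B' Z' x' y' d' \<Longrightarrow>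
        a \<in> hom C A A' \<Longrightarrow> b \<in> hom C B B' \<Longrightarrow> cmp C b x = cmp C x' a \<Longrightarrow>
        (\<exists>c \<in> hom C Z Z'. cmp C c y = cmp C y' b \<and> push C a d = pull C c d')"
  using ax[unfolded extriangulated_def] unfolding ET3_def by blast
lemma et3op: "conf C A B Z x y d \<Longrightarrow> conf C A' B' Z' x' y' d' \<Longrightarrow>
        b \<in> hom C B B' \<Longrightarrow> c \<in> hom C Z Z' \<Longrightarrow> cmp C c y = cmp C y' b \<Longrightarrow>
        (\<exists>a \<in> hom C A A'. cmp C b x = cmp C x' a \<and> push C a d = pull C c d')"
  using ax[unfolded extriangulated_def] unfolding ET3op_def by blast
lemma et4: "conf C A B D f f' d \<Longrightarrow> conf C B C' F g g' d' \<Longrightarrow>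
        (\<exists>E h h' dm e d''.
           conf C A C' E h h' d'' \<and>
           conf C D E F dm e (push C f' d') \<and>
           h = cmp C g f \<and> cmp C dm f' = cmp C h' g \<and> cmp C e h' = g' \<and>
           pull C dm d'' = d \<and> push C f d'' = pull C e d')"
  using ax[unfolded extriangulated_def] unfolding ET4_def by blast
lemma et4op: "conf C D A B f' f d \<Longrightarrow> conf C F B C' g' g d' \<Longrightarrow>
        (\<exists>E h h' dm e d''.
           conf C E A C' h' h d'' \<and>
           conf C D E F dm e (pull C g' d) \<and>
           cmp C h' dm = f' \<and> cmp C g' e = cmp C f h' \<and> cmp C g f = h \<and>
           d' = push C e d'' \<and> push C dm d = pull C g d'')"
  using ax[unfolded extriangulated_def] unfolding ET4op_def by blast


lemma zobj: obtains Z where "is_zero_obj C Z" using zero_obj_ex by blast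
lemma zhom1: "is_zero_obj C Z \<Longrightarrow> f \<in> hom C Z X \<Longrightarrow> f = 0" using zero_homs by blast
lemma zhom2: "is_zero_obj C Z \<Longrightarrow> f \<in> hom C X Z \<Longrightarrow> f = 0" using zero_homs by blast

lemma bip_swap: "biproduct C X Y S i1 i2 p1 p2 \<Longrightarrow> biproduct C Y X S i2 i1 p2 p1"
  unfolding biproduct_def by (simp add: add.commute)

lemma bip_zr: assumes z: "is_zero_obj C Z0" shows "biproduct C X Z0 X (idm C X) 0 (idm C X) 0"
proof -
  have "cmp C (0::'m) (0::'m) = (0::'m)" using cmp_0l[of 0 Z0 X] by simp
  thus ?thesis unfolding biproduct_def using zero_id[OF z] id_r[OF id_hom[of X]] by simp
qed
lemma bip_zl: "is_zero_obj C Z0 \<Longrightarrow> biproduct C Z0 X X 0 (idm C X) 0 (idm C X)"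
  using bip_swap bip_zr by blast

lemma conf_zr: "is_zero_obj C Z0 \<Longrightarrow> conf C X X Z0 (idm C X) 0 0"
  using split_conf[OF bip_zr] by blast
lemma conf_zl: "is_zero_obj C Z0 \<Longrightarrow> conf C Z0 X X 0 (idm C X) 0"
  using split_conf[OF bip_zl] by blast

lemma H0: assumes c: "conf C A B Z x y d" shows "cmp C y x = 0"
proof -
  obtain Z0 where z: "is_zero_obj C Z0" by (rule zobj)
  from et3[OF conf_zr[OF z] c id_hom conf_x[OF c]] conf_x[OF c]
  obtain cc where "cc \<in> hom C Z0 Z" "cmp C cc 0 = cmp C y x" by auto
  moreover have "cc = 0" using zhom1[OF z] \<open>cc \<in> hom C Z0 Z\<close> by blast
  ultimately show ?thesis using cmp_0l[of 0 A Z0] by simp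
qed

lemma H1: assumes c: "conf C A B Z x y d" and f: "f \<in> hom C U B" and e: "cmp C y f = 0"
  shows "\<exists>a \<in> hom C U A. f = cmp C x a"
proof -
  obtain Z0 where z: "is_zero_obj C Z0" by (rule zobj)
  have "cmp C (0::'m) (0::'m) = cmp C y f" using e cmp_0l[of 0 U Z0] by simp
  from et3op[OF conf_zr[OF z] c f zero_hom this] f show ?thesis by auto
qed

lemma H2: assumes c: "conf C A B Z x y d" and f: "f \<in> hom C B U" and e: "cmp C f x = 0"
  shows "\<exists>cc \<in> hom C Z U. f = cmp C cc y"
proof -
  obtain Z0 where z: "is_zero_obj C Z0" by (rule zobj)
  have "cmp C f x = cmp C (0::'m) (0::'m)" using e cmp_0l[of 0 A Z0] by simp
  from et3[OF c conf_zl[OF z] zero_hom f this] f show ?thesis by auto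
qed

lemma H3: assumes c: "conf C A B Z x y d" and cc: "cc \<in> hom C U Z" and e: "pull C cc d = 0"
  shows "\<exists>b \<in> hom C U B. cmp C y b = cc"
proof -
  obtain Z0 where z: "is_zero_obj C Z0" by (rule zobj)
  have "push C (0::'m) (0::'e) = pull C cc d" using e push_0d[of 0 Z0 A] by simp
  from morph[OF conf_zl[OF z] c zero_hom cc this] cc show ?thesis by auto
qed

lemma iso_inv: "is_iso C X Y b \<Longrightarrow> \<exists>g \<in> hom C Y X. cmp C g b = idm C X \<and> cmp C b g = idm C Y"
  unfolding is_iso_def by blast
lemma iso_hom: "is_iso C X Y b \<Longrightarrow> b \<in> hom C X Y"
  unfolding is_iso_def by blast

lemma EM: assumes c: "conf C A B Z x y dl" and d: "d \<in> ext C V B" and e: "push C y d = 0"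
  shows "\<exists>d' \<in> ext C V A. d = push C x d'"
proof -
  obtain M m n where cd: "conf C B M V m n d" using realize[OF d] by blast
  obtain E h h' dm ee d'' where
    c1: "conf C A M E h h' d''" and c2: "conf C Z E V dm ee (push C y d)"
    and r: "push C x d'' = pull C ee d"
    using et4[OF c cd] by blast
  have c2': "conf C Z E V dm ee 0" using c2 e by simp
  obtain S i1 i2 p1 p2 where bp: "biproduct C Z V S i1 i2 p1 p2" using biprod_ex by blast
  have bh: "i1 \<in> hom C Z S" "i2 \<in> hom C V S" "p1 \<in> hom C S Z" "p2 \<in> hom C S V"
     "cmp C p2 i2 = idm C V" using bp unfolding biproduct_def by auto
  obtain b where b: "is_iso C E S b" "cmp C p2 b = ee"
    using iso_cl[OF c2'] split_conf[OF bp] by blast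
  obtain g where g: "g \<in> hom C S E" "cmp C b g = idm C S" using iso_inv[OF b(1)] by blast
  have bh2: "b \<in> hom C E S" using iso_hom[OF b(1)] .
  have eeh: "ee \<in> hom C E V" using conf_y[OF c2'] .
  define s where "s = cmp C g i2"
  have sh: "s \<in> hom C V E" using s_def g bh by blast
  have "cmp C ee s = cmp C (cmp C p2 b) (cmp C g i2)" using b s_def by simp
  also have "\<dots> = cmp C p2 (cmp C b (cmp C g i2))"
    using assoc[OF comp_hom[OF bh(2) g(1)] bh2 bh(4)] by simp
  also have "\<dots> = cmp C p2 (cmp C (cmp C b g) i2)"
    using assoc[OF bh(2) g(1) bh2] by simp
  also have "\<dots> = idm C V" using g bh by simp
  finally have es: "cmp C ee s = idm C V" .
  have d''e: "d'' \<in> ext C E A" using conf_d[OF c1] .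
  have "d = pull C (cmp C ee s) d" using es d by simp
  also have "\<dots> = pull C s (pull C ee d)" using pull_comp[OF eeh sh d] .
  also have "\<dots> = pull C s (push C x d'')" using r by simp
  also have "\<dots> = push C x (pull C s d'')" using push_pull[OF conf_x[OF c] sh d''e] by simp
  finally show ?thesis using pull_ext[OF sh d''e] by blast
qed

lemma EC: assumes c: "conf C A B Z x y dl" and et: "\<eta> \<in> ext C Z K" and e: "pull C y \<eta> = 0"
  shows "\<exists>\<phi> \<in> hom C A K. \<eta> = push C \<phi> dl"
proof -
  obtain Q q r where cq: "conf C K Q Z q r \<eta>" using realize[OF et] by blast
  obtain S i1 i2 p1 p2 where bp: "biproduct C K B S i1 i2 p1 p2" using biprod_ex by blast
  have bh: "i1 \<in> hom C K S" "i2 \<in> hom C B S" "p1 \<in> hom C S K" "p2 \<in> hom C S B"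
     "cmp C p2 i2 = idm C B" using bp unfolding biproduct_def by auto
  have "push C (idm C K) (0::'e) = pull C y \<eta>" using e push_0d[OF id_hom] by simp
  from morph[OF split_conf[OF bp] cq id_hom conf_y[OF c] this]
  obtain \<beta> where \<beta>: "\<beta> \<in> hom C S Q" "cmp C r \<beta> = cmp C y p2" by blast
  define s where "s = cmp C \<beta> i2"
  have sh: "s \<in> hom C B Q" using s_def \<beta> bh by blast
  have rh: "r \<in> hom C Q Z" using conf_y[OF cq] .
  have yh: "y \<in> hom C B Z" using conf_y[OF c] .
  have "cmp C r s = cmp C (cmp C r \<beta>) i2" using assoc[OF bh(2) \<beta>(1) rh] s_def by simp
  also have "\<dots> = cmp C y (cmp C p2 i2)" using \<beta>(2) assoc[OF bh(2) bh(4) yh] by simp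
  finally have rs: "cmp C r s = y" using bh(5) yh by simp
  have "cmp C (idm C Z) y = cmp C r s" using rs yh by simp
  from et3op[OF c cq sh id_hom this] et show ?thesis by auto
qed


lemma bip_hom: assumes "biproduct C X Y S i1 i2 p1 p2"
  shows "i1 \<in> hom C X S" "i2 \<in> hom C Y S" "p1 \<in> hom C S X" "p2 \<in> hom C S Y"
    "cmp C p1 i1 = idm C X" "cmp C p2 i2 = idm C Y" "cmp C p1 i2 = 0" "cmp C p2 i1 = 0"
    "cmp C i1 p1 + cmp C i2 p2 = idm C S"
  using assms unfolding biproduct_def by auto

lemma bip_adjust:
  assumes bp: "biproduct C K A E dm s r e" and ph: "\<phi> \<in> hom C A K"
  shows "biproduct C K A E dm (s + cmp C dm \<phi>) (r - cmp C \<phi> e) e"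
proof -
  note h = bip_hom[OF bp]
  have dph: "cmp C dm \<phi> \<in> hom C A E" using h ph by blast
  have peh: "cmp C \<phi> e \<in> hom C E K" using h ph by blast
  have s'h: "s + cmp C dm \<phi> \<in> hom C A E" using h dph by blast
  have r'h: "r - cmp C \<phi> e \<in> hom C E K" using h peh by blast
  have "cmp C e (cmp C dm \<phi>) = cmp C (cmp C e dm) \<phi>" using assoc[OF ph h(1) h(4)] .
  hence e1: "cmp C e (cmp C dm \<phi>) = 0" using h(8) ph by simp
  have E1: "cmp C e (s + cmp C dm \<phi>) = idm C A"
    using distl[OF h(2) dph h(4)] e1 h(6) by simp
  have "cmp C (cmp C \<phi> e) dm = cmp C \<phi> (cmp C e dm)" using assoc[OF h(1) h(4) ph] by simp
  hence e2: "cmp C (cmp C \<phi> e) dm = 0" using h(8) ph by simp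
  have E2: "cmp C (r - cmp C \<phi> e) dm = idm C K"
    using cmp_diffl[OF h(1) h(3) peh] e2 h(5) by simp
  have a1: "cmp C r (cmp C dm \<phi>) = \<phi>" using assoc[OF ph h(1) h(3)] h(5) ph by simp
  have a2: "cmp C (cmp C \<phi> e) s = \<phi>" using assoc[OF h(2) h(4) ph, symmetric] h(6) ph by simp
  have a3: "cmp C (cmp C \<phi> e) (cmp C dm \<phi>) = 0"
    using assoc[OF dph h(4) ph, symmetric] e1 ph by simp
  have "cmp C (r - cmp C \<phi> e) (s + cmp C dm \<phi>)
        = cmp C r (s + cmp C dm \<phi>) - cmp C (cmp C \<phi> e) (s + cmp C dm \<phi>)"
    using cmp_diffl[OF s'h h(3) peh] .
  also have "\<dots> = (cmp C r s + cmp C r (cmp C dm \<phi>)) - (cmp C (cmp C \<phi> e) s + cmp C (cmp C \<phi> e) (cmp C dm \<phi>))"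
    using distl[OF h(2) dph h(3)] distl[OF h(2) dph peh] by simp
  also have "\<dots> = 0" using a1 a2 a3 h(7) by simp
  finally have E3: "cmp C (r - cmp C \<phi> e) (s + cmp C dm \<phi>) = 0" .
  have b1: "cmp C dm (r - cmp C \<phi> e) = cmp C dm r - cmp C dm (cmp C \<phi> e)"
    using cmp_diffr[OF h(3) peh h(1)] .
  have b2: "cmp C (s + cmp C dm \<phi>) e = cmp C s e + cmp C (cmp C dm \<phi>) e"
    using distr[OF h(4) h(2) dph] .
  have b3: "cmp C (cmp C dm \<phi>) e = cmp C dm (cmp C \<phi> e)" using assoc[OF h(4) ph h(1)] by simp
  have E4: "cmp C dm (r - cmp C \<phi> e) + cmp C (s + cmp C dm \<phi>) e = idm C E"
    using b1 b2 b3 h(9) by (simp add: algebra_simps)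
  have E5: "cmp C e dm = 0" using h(8) .
  show ?thesis unfolding biproduct_def using h(1,4) s'h r'h E1 E2 E3 E4 E5 by simp
qed

lemma HB:
  assumes cA: "conf C A B Z x y dl" and cT: "conf C K T0 Z i p ep"
    and cN: "conf C K N B n e2 (pull C y ep)"
  shows "\<exists>E3 u v d3. isomorphic C T0 E3 \<and> conf C A N E3 u v d3"
proof -
  have xh: "x \<in> hom C A B" and yh: "y \<in> hom C B Z" and dle: "dl \<in> ext C Z A"
    using conf_x[OF cA] conf_y[OF cA] conf_d[OF cA] .
  have epe: "ep \<in> ext C Z K" using conf_d[OF cT] .
  obtain E h h' dm e' d'' where
    cEN: "conf C E N Z h' h d''" and cKE0: "conf C K E A dm e' (pull C x (pull C y ep))"
    and r1: "dl = push C e' d''" and r2: "push C dm (pull C y ep) = pull C y d''"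
    using et4op[OF cN cA] by blast
  have "pull C x (pull C y ep) = pull C (cmp C y x) ep" using pull_comp[OF yh xh epe] by simp
  also have "\<dots> = 0" using H0[OF cA] epe by simp
  finally have cKE: "conf C K E A dm e' 0" using cKE0 by simp
  have dmh: "dm \<in> hom C K E" and e'h: "e' \<in> hom C E A" using conf_x[OF cKE] conf_y[OF cKE] .
  have d''e: "d'' \<in> ext C Z E" using conf_d[OF cEN] .
  obtain S i1 i2 p1 p2 where bp: "biproduct C K A S i1 i2 p1 p2" using biprod_ex by blast
  note bh = bip_hom[OF bp]
  obtain b where b: "is_iso C E S b" "cmp C b dm = i1" "cmp C p2 b = e'"
    using iso_cl[OF cKE] split_conf[OF bp] by blast
  obtain g where g: "g \<in> hom C S E" "cmp C g b = idm C E" "cmp C b g = idm C S" using iso_inv[OF b(1)] by blast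
  have bhm: "b \<in> hom C E S" using iso_hom[OF b(1)] .
  define sg where "sg = cmp C g i2"
  define rh where "rh = cmp C p1 b"
  have sgh: "sg \<in> hom C A E" using sg_def g bh by blast
  have rhh: "rh \<in> hom C E K" using rh_def bhm bh by blast
  have dmg: "dm = cmp C g i1"
    using assoc[OF dmh bhm g(1)] g(2) b(2) dmh by simp
  have Bp: "biproduct C K A E dm sg rh e'"
  proof -
    have f1: "cmp C rh dm = idm C K" using rh_def assoc[OF dmh bhm bh(3)] b(2) bh(5) by simp
    have gi2: "cmp C b sg = i2" using sg_def assoc[OF bh(2) g(1) bhm] g(3) bh(2) by simp
    have f2: "cmp C e' sg = idm C A" using gi2 b(3) assoc[OF sgh bhm bh(4)] bh(6) by simp
    have f3: "cmp C rh sg = 0" using gi2 rh_def assoc[OF sgh bhm bh(3)] bh(7) by simp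
    have f4: "cmp C e' dm = 0" using H0[OF cKE] .
    have "cmp C dm rh + cmp C sg e' = cmp C (cmp C g i1) (cmp C p1 b) + cmp C (cmp C g i2) (cmp C p2 b)"
      using dmg sg_def rh_def b(3) by simp
    also have "\<dots> = cmp C g (cmp C (cmp C i1 p1) b) + cmp C g (cmp C (cmp C i2 p2) b)"
      using assoc[OF comp_hom[OF bhm bh(3)] bh(1) g(1)] assoc[OF comp_hom[OF bhm bh(4)] bh(2) g(1)]
        assoc[OF bhm bh(3) bh(1)] assoc[OF bhm bh(4) bh(2)] by simp
    also have "\<dots> = cmp C g (cmp C (cmp C i1 p1 + cmp C i2 p2) b)"
      using distr[OF bhm comp_hom[OF bh(3) bh(1)] comp_hom[OF bh(4) bh(2)]]
        distl[OF comp_hom[OF bhm comp_hom[OF bh(3) bh(1)]] comp_hom[OF bhm comp_hom[OF bh(4) bh(2)]] g(1)]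
      by simp
    also have "\<dots> = idm C E" using bh(9) bhm g(2) by simp
    finally have f5: "cmp C dm rh + cmp C sg e' = idm C E" .
    show ?thesis unfolding biproduct_def using dmh sgh rhh e'h f1 f2 f3 f4 f5 by simp
  qed
  define eta where "eta = push C rh d'' - ep"
  have etae: "eta \<in> ext C Z K" using eta_def rhh d''e epe by blast
  have pye: "pull C y ep \<in> ext C B K" using yh epe by blast
  have "pull C y (push C rh d'') = push C rh (pull C y d'')" using push_pull[OF rhh yh d''e] by simp
  also have "\<dots> = push C rh (push C dm (pull C y ep))" using r2 by simp
  also have "\<dots> = push C (cmp C rh dm) (pull C y ep)" using push_comp[OF dmh rhh pye] by simp
  also have "\<dots> = pull C y ep" using bip_hom(5)[OF Bp] pye by simp
  finally have "pull C y eta = 0" using eta_def pull_diffd[OF yh _ epe, of "push C rh d''"] rhh d''e by auto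
  from EC[OF cA etae this] obtain \<phi> where ph: "\<phi> \<in> hom C A K" "eta = push C \<phi> dl" by blast
  define r' where "r' = rh - cmp C \<phi> e'"
  define s' where "s' = sg + cmp C dm \<phi>"
  have Bp': "biproduct C K A E dm s' r' e'" using bip_adjust[OF Bp ph(1)] r'_def s'_def by simp
  have "push C r' d'' = push C rh d'' - push C (cmp C \<phi> e') d''"
    using r'_def push_diffa[OF rhh comp_hom[OF e'h ph(1)] d''e] by simp
  also have "\<dots> = push C rh d'' - push C \<phi> dl" using push_comp[OF e'h ph(1) d''e] r1 by simp
  also have "\<dots> = ep"
  proof -
    have "push C \<phi> dl = push C rh d'' - ep" using ph(2) eta_def by simp
    thus ?thesis by simp
  qed
  finally have pr: "push C r' d'' = ep" .
  have cAE: "conf C A E K s' r' 0" using split_conf[OF bip_swap[OF Bp']] .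
  obtain E3 hh hh' dm3 e3 d3 where c1: "conf C A N E3 hh hh' d3" and c2: "conf C K E3 Z dm3 e3 (push C r' d'')"
    using et4[OF cAE cEN] by blast
  have c2': "conf C K E3 Z dm3 e3 ep" using c2 pr by simp
  obtain w where "is_iso C T0 E3 w" using iso_cl[OF cT] c2' by blast
  hence "isomorphic C T0 E3" unfolding isomorphic_def by blast
  thus ?thesis using c1 by blast
qed


lemma V1: assumes c: "conf C A B Z x y dl" and a: "ext C V A = {0}" and z: "ext C V Z = {0}"
  shows "ext C V B = {0}"
proof -
  have "d = 0" if d: "d \<in> ext C V B" for d
  proof -
    have "push C y d \<in> ext C V Z" using conf_y[OF c] d by blast
    hence "push C y d = 0" using z by blast
    from EM[OF c d this] obtain d' where "d' \<in> ext C V A" "d = push C x d'" by blast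
    thus ?thesis using a conf_x[OF c] by simp
  qed
  thus ?thesis by blast
qed

lemma ret: assumes bp: "biproduct C X Y W i1 i2 p1 p2" and w: "ext C V W = {0}"
  shows "ext C V X = {0}"
proof -
  note h = bip_hom[OF bp]
  have "d = 0" if d: "d \<in> ext C V X" for d
  proof -
    have "push C i1 d \<in> ext C V W" using h d by blast
    hence z: "push C i1 d = 0" using w by blast
    have "d = push C (cmp C p1 i1) d" using h(5) d by simp
    also have "\<dots> = push C p1 (push C i1 d)" using push_comp[OF h(1) h(3) d] .
    finally show ?thesis using z h(3) by simp
  qed
  thus ?thesis by blast
qed

end

locale ex2 = ex +
  fixes \<Omega> :: "'o \<Rightarrow> 'o" and T :: "'o set"
  assumes syz: "syzygy C \<Omega>" and sub: "subcat C T" and so: "self_orthogonal C \<Omega> T"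
begin

abbreviation "perp \<equiv> right_perp C \<Omega> T"
abbreviation "TXX \<equiv> TX C \<Omega> T"

lemma V2: assumes c: "conf C A B Z x y dl" and b: "ext C V B = {0}" and a: "ext C (\<Omega> V) A = {0}"
  shows "ext C V Z = {0}"
proof -
  have yh: "y \<in> hom C B Z" using conf_y[OF c] .
  have dle: "dl \<in> ext C Z A" using conf_d[OF c] .
  have "e = 0" if e: "e \<in> ext C V Z" for e
  proof -
    obtain M u v where cM: "conf C Z M V u v e" using realize[OF e] by blast
    obtain P q p dV where pp: "projective C P" and cP: "conf C (\<Omega> V) P V q p dV"
      using syz unfolding syzygy_def by blast
    have ph: "p \<in> hom C P V" using conf_y[OF cP] .
    obtain g where g: "g \<in> hom C P M" "cmp C v g = p"
      using pp[unfolded projective_def, rule_format, OF cM ph] by blast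
    have "cmp C (idm C V) p = cmp C v g" using g ph by simp
    from et3op[OF cP cM g(1) id_hom this] obtain a' where
      a': "a' \<in> hom C (\<Omega> V) Z" "push C a' dV = pull C (idm C V) e" by blast
    have dVe: "dV \<in> ext C V (\<Omega> V)" using conf_d[OF cP] .
    have "pull C a' dl \<in> ext C (\<Omega> V) A" using a'(1) dle by blast
    hence "pull C a' dl = 0" using a by blast
    from H3[OF c a'(1) this] obtain b' where b': "b' \<in> hom C (\<Omega> V) B" "cmp C y b' = a'" by blast
    have "e = push C a' dV" using a'(2) e by simp
    also have "\<dots> = push C y (push C b' dV)" using push_comp[OF b'(1) yh dVe] b'(2) by simp
    also have "push C b' dV = 0" using b push_ext[OF b'(1) dVe] by blast
    finally show ?thesis using yh by simp
  qed
  thus ?thesis by blast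
qed

lemma perp_iff: "Y \<in> perp \<longleftrightarrow> (\<forall>n. \<forall>U\<in>T. ext C ((\<Omega> ^^ n) U) Y = {0})"
proof
  assume "Y \<in> perp"
  hence h: "\<forall>i\<ge>1. \<forall>U\<in>T. ext C ((\<Omega> ^^ (i - 1)) U) Y = {0}"
    unfolding right_perp_def hext_def by blast
  show "\<forall>n. \<forall>U\<in>T. ext C ((\<Omega> ^^ n) U) Y = {0}"
  proof (intro allI ballI)
    fix n U assume "U \<in> T"
    thus "ext C ((\<Omega> ^^ n) U) Y = {0}" using h[rule_format, of "Suc n" U] by simp
  qed
next
  assume "\<forall>n. \<forall>U\<in>T. ext C ((\<Omega> ^^ n) U) Y = {0}"
  thus "Y \<in> perp" unfolding right_perp_def hext_def by blast
qed

lemma T_perp: assumes "U \<in> T" shows "U \<in> perp"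
  unfolding right_perp_def
proof (intro CollectI allI impI ballI)
  fix i :: nat and T0 assume "1 \<le> i" "T0 \<in> T"
  thus "hext C \<Omega> i T0 U = {0}" using so assms unfolding self_orthogonal_def by blast
qed

lemma perp_ext: assumes c: "conf C A B Z x y dl" and "A \<in> perp" "Z \<in> perp" shows "B \<in> perp"
  unfolding perp_iff
proof (intro allI ballI)
  fix n U assume u: "U \<in> T"
  show "ext C ((\<Omega> ^^ n) U) B = {0}"
    by (rule V1[OF c]) (use assms u in \<open>simp_all add: perp_iff\<close>)
qed

lemma perp_cone: assumes c: "conf C A B Z x y dl" and a: "A \<in> perp" and b: "B \<in> perp"
  shows "Z \<in> perp"
  unfolding perp_iff
proof (intro allI ballI)
  fix n U assume u: "U \<in> T"
  have "ext C ((\<Omega> ^^ (Suc n)) U) A = {0}" using a u unfolding perp_iff by blast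
  hence "ext C (\<Omega> ((\<Omega> ^^ n) U)) A = {0}" by simp
  moreover have "ext C ((\<Omega> ^^ n) U) B = {0}" using b u unfolding perp_iff by blast
  ultimately show "ext C ((\<Omega> ^^ n) U) Z = {0}" using V2[OF c] by blast
qed

lemma perp_ret: assumes bp: "biproduct C X Y W i1 i2 p1 p2" and w: "W \<in> perp" shows "X \<in> perp"
  unfolding perp_iff
proof (intro allI ballI)
  fix n U assume u: "U \<in> T"
  show "ext C ((\<Omega> ^^ n) U) X = {0}"
    by (rule ret[OF bp]) (use w u in \<open>simp add: perp_iff\<close>)
qed

lemma TX_step: assumes "A \<in> TXX"
  shows "\<exists>K T0 x y d. T0 \<in> T \<and> K \<in> TXX \<and> K \<in> perp \<and> conf C K T0 A x y d"
proof -
  obtain K Tm x y d where k: "K 0 = A" and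
    r: "\<And>i. Tm i \<in> T \<and> K (Suc i) \<in> perp \<and> conf C (K (Suc i)) (Tm i) (K i) (x i) (y i) (d i)"
    using assms unfolding TX_def by blast
  have "K 1 \<in> TXX" unfolding TX_def
  proof (intro CollectI exI conjI allI)
    show "(\<lambda>i. K (Suc i)) 0 = K 1" by simp
    fix i show "(\<lambda>i. Tm (Suc i)) i \<in> T" using r by blast
    show "(\<lambda>i. K (Suc i)) (Suc i) \<in> perp" using r by blast
    show "conf C ((\<lambda>i. K (Suc i)) (Suc i)) ((\<lambda>i. Tm (Suc i)) i) ((\<lambda>i. K (Suc i)) i) ((\<lambda>i. x (Suc i)) i) ((\<lambda>i. y (Suc i)) i) ((\<lambda>i. d (Suc i)) i)"
      using r by blast
  qed
  thus ?thesis using r[of 0] k by (metis One_nat_def)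
qed

lemma TX_perp: assumes "A \<in> TXX" shows "A \<in> perp"
proof -
  obtain K T0 x y d where "T0 \<in> T" "K \<in> perp" "conf C K T0 A x y d" using TX_step[OF assms] by blast
  thus ?thesis using perp_cone T_perp by blast
qed

lemma coind:
  assumes h: "\<And>A. A \<in> S \<Longrightarrow> \<exists>K T0 x y d. T0 \<in> T \<and> K \<in> S \<and> K \<in> perp \<and> conf C K T0 A x y d"
    and a: "A \<in> S"
  shows "A \<in> TXX"
proof -
  define P where "P = (\<lambda>A q. case q of (K, T0, x, y, d) \<Rightarrow>
       T0 \<in> T \<and> K \<in> S \<and> K \<in> perp \<and> conf C K T0 A x y d)"
  define nx where "nx = (\<lambda>A. SOME q. P A q)"
  have nxP: "P B (nx B)" if "B \<in> S" for B
  proof -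
    from h[OF that] obtain K T0 x y d where "T0 \<in> T \<and> K \<in> S \<and> K \<in> perp \<and> conf C K T0 B x y d" by blast
    hence "P B (K, T0, x, y, d)" unfolding P_def by simp
    thus ?thesis unfolding nx_def by (rule someI)
  qed
  define Ks where "Ks = rec_nat A (\<lambda>_ B. fst (nx B))"
  have K0: "Ks 0 = A" unfolding Ks_def by simp
  have KS: "Ks (Suc i) = fst (nx (Ks i))" for i unfolding Ks_def by simp
  have inS: "Ks i \<in> S" for i
  proof (induction i)
    case 0 show ?case using K0 a by simp
  next
    case (Suc i)
    have "P (Ks i) (nx (Ks i))" using nxP[OF Suc] .
    thus ?case unfolding KS P_def by (auto split: prod.splits)
  qed
  define Tm where "Tm = (\<lambda>i. fst (snd (nx (Ks i))))"
  define xx where "xx = (\<lambda>i. fst (snd (snd (nx (Ks i)))))"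
  define yy where "yy = (\<lambda>i. fst (snd (snd (snd (nx (Ks i))))))"
  define dd where "dd = (\<lambda>i. snd (snd (snd (snd (nx (Ks i))))))"
  have st: "Tm i \<in> T \<and> Ks (Suc i) \<in> perp \<and> conf C (Ks (Suc i)) (Tm i) (Ks i) (xx i) (yy i) (dd i)" for i
  proof -
    have "P (Ks i) (nx (Ks i))" using nxP[OF inS] .
    thus ?thesis unfolding KS P_def Tm_def xx_def yy_def dd_def by (auto split: prod.splits)
  qed
  show ?thesis unfolding TX_def using K0 st by blast
qed

lemma coind2:
  assumes h: "\<And>A. A \<in> S \<Longrightarrow> A \<in> perp \<and> (\<exists>K T0 x y d. T0 \<in> T \<and> K \<in> S \<union> TXX \<and> conf C K T0 A x y d)"
    and a: "A \<in> S"
  shows "A \<in> TXX"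
proof -
  show ?thesis
  proof (rule coind[of "S \<union> TXX"])
    show "A \<in> S \<union> TXX" using a by blast
  next
    fix B assume B: "B \<in> S \<union> TXX"
    show "\<exists>K T0 x y d. T0 \<in> T \<and> K \<in> S \<union> TXX \<and> K \<in> perp \<and> conf C K T0 B x y d"
    proof (cases "B \<in> S")
      case True
      then obtain K T0 x y d where k: "T0 \<in> T" "K \<in> S \<union> TXX" "conf C K T0 B x y d" using h by blast
      have "K \<in> perp" using k(2) h TX_perp by blast
      thus ?thesis using k by blast
    next
      case False
      hence "B \<in> TXX" using B by blast
      thus ?thesis using TX_step by blast
    qed
  qed
qed


lemma T_iso: "X \<in> T \<Longrightarrow> isomorphic C X Y \<Longrightarrow> Y \<in> T"
  using sub unfolding subcat_def by blast
lemma T_bip: "biproduct C X Y S i1 i2 p1 p2 \<Longrightarrow> X \<in> T \<Longrightarrow> Y \<in> T \<Longrightarrow> S \<in> T"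
  using sub[unfolded subcat_def, THEN conjunct2, THEN conjunct2, rule_format] by blast

lemma ext_step:
  assumes cA: "conf C A B Z x y dl" and A: "A \<in> TXX" and Zt: "Z \<in> TXX"
  shows "\<exists>KA KB KC T0 u v d dm e d'. T0 \<in> T \<and> KA \<in> TXX \<and> KC \<in> TXX \<and>
           conf C KB T0 B u v d \<and> conf C KA KB KC dm e d'"
proof -
  have yh: "y \<in> hom C B Z" using conf_y[OF cA] .
  obtain KA TA xa pa ea where a1: "TA \<in> T" "KA \<in> TXX" "conf C KA TA A xa pa ea"
    using TX_step[OF A] by blast
  obtain KC TC ic pc ec where c1: "TC \<in> T" "KC \<in> TXX" "conf C KC TC Z ic pc ec"
    using TX_step[OF Zt] by blast
  have "pull C y ec \<in> ext C B KC" using yh conf_d[OF c1(3)] by blast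
  then obtain N n e2 where cN: "conf C KC N B n e2 (pull C y ec)" using realize by blast
  obtain E3 u v d3 where i3: "isomorphic C TC E3" and c3: "conf C A N E3 u v d3"
    using HB[OF cA c1(3) cN] by blast
  have E3T: "E3 \<in> T" using T_iso[OF c1(1) i3] .
  have "d3 \<in> ext C E3 A" using conf_d[OF c3] .
  moreover have "ext C ((\<Omega> ^^ 0) E3) A = {0}" using TX_perp[OF A] E3T unfolding perp_iff by blast
  ultimately have "d3 = 0" by simp
  hence c3': "conf C A N E3 u v 0" using c3 by simp
  obtain SZ j1 j2 q1 q2 where bZ: "biproduct C A E3 SZ j1 j2 q1 q2" using biprod_ex by blast
  obtain \<beta> where \<beta>: "is_iso C N SZ \<beta>" using iso_cl[OF c3'] split_conf[OF bZ] by blast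
  obtain g where g: "g \<in> hom C SZ N" "cmp C g \<beta> = idm C N" using iso_inv[OF \<beta>] by blast
  have \<beta>h: "\<beta> \<in> hom C N SZ" using iso_hom[OF \<beta>] .
  have nh: "n \<in> hom C KC N" and e2h: "e2 \<in> hom C N B" using conf_x[OF cN] conf_y[OF cN] .
  have "cmp C (cmp C e2 g) \<beta> = e2" using assoc[OF \<beta>h g(1) e2h] g(2) e2h by simp
  hence cZ: "conf C KC SZ B (cmp C \<beta> n) (cmp C e2 g) (pull C y ec)"
    using iso_cl[OF cN] \<beta> \<beta>h nh e2h g(1) by blast
  obtain Z0 where z: "is_zero_obj C Z0" by (rule zobj)
  obtain SB k1 k2 r1 r2 where bB: "biproduct C TA E3 SB k1 k2 r1 r2" using biprod_ex by blast
  from dsum[OF a1(3) conf_zl[OF z] bip_zr[OF z] bB bZ]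
  obtain xs ys ds where cS: "conf C KA SB SZ xs ys ds" by blast
  obtain KB h h' dm e d'' where "conf C KB SB B h' h d''" "conf C KA KB KC dm e (pull C (cmp C \<beta> n) ds)"
    using et4op[OF cS cZ] by blast
  moreover have "SB \<in> T" using T_bip[OF bB a1(1) E3T] .
  ultimately show ?thesis using a1(2) c1(2) by blast
qed

lemma ext_cl: assumes "conf C A B Z x y dl" "A \<in> TXX" "Z \<in> TXX" shows "B \<in> TXX"
proof -
  define S where "S = {B. \<exists>A Z x y dl. conf C A B Z x y dl \<and> A \<in> TXX \<and> Z \<in> TXX}"
  have "B \<in> S" using assms S_def by blast
  thus ?thesis
  proof (rule coind2[rotated])
    fix B assume "B \<in> S"
    then obtain A Z x y dl where c: "conf C A B Z x y dl" "A \<in> TXX" "Z \<in> TXX" using S_def by blast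
    have "B \<in> perp" using perp_ext[OF c(1) TX_perp[OF c(2)] TX_perp[OF c(3)]] .
    moreover obtain KA KB KC T0 u v d dm e d' where "T0 \<in> T" "KA \<in> TXX" "KC \<in> TXX"
           "conf C KB T0 B u v d" "conf C KA KB KC dm e d'" using ext_step[OF c] by blast
    moreover hence "KB \<in> S" using S_def by blast
    ultimately show "B \<in> perp \<and> (\<exists>K T0 x y d. T0 \<in> T \<and> K \<in> S \<union> TXX \<and> conf C K T0 B x y d)" by blast
  qed
qed

lemma cone_cl: assumes "conf C A B Z x y dl" "A \<in> TXX" "B \<in> TXX" shows "Z \<in> TXX"
proof -
  define S where "S = {Z. \<exists>A B x y dl. conf C A B Z x y dl \<and> A \<in> TXX \<and> B \<in> TXX}"
  have "Z \<in> S" using assms S_def by blast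
  thus ?thesis
  proof (rule coind2[rotated])
    fix Z assume "Z \<in> S"
    then obtain A B x y dl where c: "conf C A B Z x y dl" "A \<in> TXX" "B \<in> TXX" using S_def by blast
    have "Z \<in> perp" using perp_cone[OF c(1) TX_perp[OF c(2)] TX_perp[OF c(3)]] .
    moreover obtain KB TB i p ep where b1: "TB \<in> T" "KB \<in> TXX" "conf C KB TB B i p ep"
      using TX_step[OF c(3)] by blast
    moreover obtain E h h' dm e d'' where "conf C E TB Z h' h d''" "conf C KB E A dm e (pull C x ep)"
      using et4op[OF b1(3) c(1)] by blast
    moreover hence "E \<in> TXX" using ext_cl b1(2) c(2) by blast
    ultimately show "Z \<in> perp \<and> (\<exists>K T0 x y d. T0 \<in> T \<and> K \<in> S \<union> TXX \<and> conf C K T0 Z x y d)" by blast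
  qed
qed

lemma sum_cl: assumes "biproduct C X Y W i1 i2 p1 p2" "W \<in> TXX" shows "X \<in> TXX"
proof -
  define S where "S = {X. \<exists>Y W i1 i2 p1 p2. biproduct C X Y W i1 i2 p1 p2 \<and> W \<in> TXX}"
  have "X \<in> S" using assms S_def by blast
  thus ?thesis
  proof (rule coind2[rotated])
    fix X assume "X \<in> S"
    then obtain Y W i1 i2 p1 p2 where c: "biproduct C X Y W i1 i2 p1 p2" "W \<in> TXX" using S_def by blast
    have "X \<in> perp" using perp_ret[OF c(1) TX_perp[OF c(2)]] .
    moreover obtain K T0 i p ep where k: "T0 \<in> T" "K \<in> TXX" "conf C K T0 W i p ep"
      using TX_step[OF c(2)] by blast
    moreover obtain E1 h h' dm e d'' where e1: "conf C E1 T0 X h' h d''" "conf C K E1 Y dm e (pull C i2 ep)"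
      using et4op[OF k(3) split_conf[OF bip_swap[OF c(1)]]] by blast
    moreover obtain E2 g g' dm2 e2 d2 where e2: "conf C E2 T0 Y g' g d2" "conf C K E2 X dm2 e2 (pull C i1 ep)"
      using et4op[OF k(3) split_conf[OF c(1)]] by blast
    obtain SA a1 a2 q1 q2 where bA: "biproduct C K K SA a1 a2 q1 q2" using biprod_ex by blast
    obtain SB b1 b2 r1 r2 where bB: "biproduct C E1 E2 SB b1 b2 r1 r2" using biprod_ex by blast
    from dsum[OF e1(2) e2(2) bA bB bip_swap[OF c(1)]]
    obtain xs ys ds where cS: "conf C SA SB W xs ys ds" by blast
    have "SA \<in> TXX" using ext_cl[OF split_conf[OF bA] k(2) k(2)] .
    hence "SB \<in> TXX" using ext_cl[OF cS _ c(2)] by blast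
    hence "E1 \<in> S" using S_def bB by blast
    ultimately show "X \<in> perp \<and> (\<exists>K T0 x y d. T0 \<in> T \<and> K \<in> S \<union> TXX \<and> conf C K T0 X x y d)" by blast
  qed
qed

end

theorem lemma3p6:
  fixes C :: "('o, 'm::ab_group_add, 'e::ab_group_add) extri"
    and \<Omega> :: "'o \<Rightarrow> 'o"
    and T :: "'o set"
  assumes "extriangulated C"
    and "krull_schmidt C"
    and "enough_projectives C"
    and "enough_injectives C"
    and "syzygy C \<Omega>"
    and "subcat C T"
    and "self_orthogonal C \<Omega> T"
  shows "ext_closed C (TX C \<Omega> T) \<and> summand_closed C (TX C \<Omega> T) \<and> cone_closed C (TX C \<Omega> T)"
proof -
  interpret ex2 C \<Omega> T using assms by (simp add: ex2_def ex_def ex2_axioms_def)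
  show ?thesis unfolding ext_closed_def summand_closed_def cone_closed_def
    using ext_cl sum_cl cone_cl by blast
qed

end
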